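(* Let $m$ be a positive integer and $x>1$ an integer. Let $j_m(x)\in\{0,\dots,x-1\}$ be the column of row $x$ of $T_m$ containing the value $1$. Then $J_{m+1}(x)$ is the element of $\{1,2,\dots,x\}$ congruent to $m-j_m(x)$ modulo $x$. Equivalently, in the Josephus game played on row $x$ of $T_m$, the entry $1$ is the last one remaining.
   Context: The triangle $T_m$ is an array whose row $x$ ($x=1,2,\dots$) has $x$ entries, in columns $0,\dots,x-1$. Row $1$ is the single entry $1$. For $x>1$, row $x$ is obtained from row $x-1$ by rotating it cyclically left by $m$ positions (the entry in column $c$ of row $x-1$ moves to column $(c-m)\bmod(x-1)\in\{0,\dots,x-2\}$ of row $x$), then appending in column $x-1$ a new entry equal to $1$ plus the entry in column $0$ of row $x-1$. Each row of $T_m$ contains exactly one entry equal to $1$. Josephus problem: place the integers $1,\dots,x$ clockwise in a circle; starting the count at $1$, repeatedly count $n$ consecutive remaining numbers clockwise and eliminate the $n$-th one counted, resuming the count at the next remaining number, until one number remains; $J_n(x)$ is that number. Josephus game on row $x$ of $T_m$: start at the entry in column $(m-1)\bmod x$, counting it as $1$; moving cyclically to the left (from column $0$ wrap to column $x-1$) over entries not yet crossed out, count $1,2,\dots,m+1$ and cross out the entry counted $m+1$; the next count starts (as $1$) at the next not-crossed-out entry to its left. Repeat until one entry remains. *)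

theory Defs
  imports Main "HOL-Number_Theory.Cong"
begin

text \<open>Row x of the triangle T_m, as a list of length x (index = column).
  Rotating cyclically left by m positions is List.rotate m
  (entry in column c moves to column (c - m) mod (x-1)).\<close>
fun Trow :: "nat \<Rightarrow> nat \<Rightarrow> nat list" where
  "Trow m 0 = []"
| "Trow m (Suc 0) = [1]"
| "Trow m (Suc (Suc n)) =
     (let r = Trow m (Suc n) in rotate m r @ [hd r + 1])"

definition jcol :: "nat \<Rightarrow> nat \<Rightarrow> nat" where
  "jcol m x = (THE c. c < x \<and> Trow m x ! c = 1)"

text \<open>Generic elimination process on a circle: xs lists the remaining items
  in the order of counting; counting starts (as 1) at index i; the n-th counted
  item (index (i+n-1) mod length) is removed and counting resumes at the next
  remaining item, which then sits at the same index (mod the new length).\<close>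
function elim_last :: "nat \<Rightarrow> 'a list \<Rightarrow> nat \<Rightarrow> 'a" where
  "elim_last n xs i =
     (if length xs \<le> 1 then hd xs
      else (let k = (i + n - 1) mod length xs
            in elim_last n (take k xs @ drop (Suc k) xs) (k mod (length xs - 1))))"
  by pat_completeness auto
termination
proof (relation "measure (\<lambda>(n, xs, i). length xs)")
  fix n xs i k
  assume "\<not> length xs \<le> 1" and "k = (i + n - 1) mod length xs"
  then have "length xs > 0" by linarith
  then have "k < length xs" using \<open>k = _\<close> by simp
  then show "((n, take k xs @ drop (Suc k) xs, k mod (length xs - 1)), n, xs, i)
      \<in> measure (\<lambda>(n, xs, i). length xs)" by simp
qed simp

definition josephus :: "nat \<Rightarrow> nat \<Rightarrow> nat" where
  "josephus n x = elim_last n [1..<x+1] 0"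

text \<open>Josephus game on row x of T_m, tracked by column: moving left means
  visiting columns in decreasing order cyclically, i.e. going forward in
  rev [0..<x]; column c sits at index x - 1 - c of that list.  Start at column
  (m-1) mod x, cross out every (m+1)-th.\<close>
definition game_last_col :: "nat \<Rightarrow> nat \<Rightarrow> nat" where
  "game_last_col m x = elim_last (m + 1) (rev [0..<x]) (x - 1 - ((m - 1) mod x))"

end

theory Submission
  imports Defs
begin

declare elim_last.simps[simp del]

fun R :: "nat \<Rightarrow> nat \<Rightarrow> nat" where
  "R n 0 = 0"
| "R n (Suc 0) = 0"
| "R n (Suc (Suc L)) = (n + R n (Suc L)) mod Suc (Suc L)"

lemma R_lt: "L \<ge> 1 \<Longrightarrow> R n L < L"
  by (induction n L rule: R.induct) auto

lemma elim_R:
  assumes "n > 0" "length xs \<ge> 1"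
  shows "elim_last n xs i = xs ! ((i + R n (length xs)) mod length xs)"
  using assms
proof (induction n xs i rule: elim_last.induct)
  case (1 n xs i)
  show ?case
  proof (cases "length xs \<le> 1")
    case True
    then have "length xs = 1" using 1 by simp
    then show ?thesis by (subst elim_last.simps) (cases xs, auto)
  next
    case False
    define L where "L = length xs - 1"
    have L1: "L \<ge> 1" and lx: "length xs = Suc L" using False L_def by auto
    define k where "k = (i + n - 1) mod length xs"
    have kL: "k < Suc L" using lx k_def by simp
    define ys where "ys = take k xs @ drop (Suc k) xs"
    have ly: "length ys = L" using ys_def kL lx by simp
    have e: "elim_last n xs i = elim_last n ys (k mod L)"
      using False by (subst elim_last.simps) (simp add: Let_def k_def ys_def L_def)
    have IH: "elim_last n ys (k mod L) = ys ! ((k mod L + R n L) mod L)"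
      using "1.IH"[OF False k_def "1.prems"(1)] ly L1 unfolding ys_def L_def by simp
    define t where "t = R n L"
    have tL: "t < L" using R_lt[OF L1] t_def by simp
    obtain L' where L': "L = Suc L'" using L1 by (cases L) auto
    have RS: "R n (Suc L) = (n + t) mod Suc L" using L' t_def by simp
    have idx: "(i + R n (Suc L)) mod Suc L = (k + 1 + t) mod Suc L"
    proof -
      have "(i + R n (Suc L)) mod Suc L = (i + (n + t)) mod Suc L"
        unfolding RS by (simp add: mod_add_right_eq)
      also have "i + (n + t) = (i + n - 1) + (1 + t)" using "1.prems"(1) by linarith
      also have "((i + n - 1) + (1 + t)) mod Suc L = (k + (1 + t)) mod Suc L"
        unfolding k_def lx by (simp only: mod_add_left_eq)
      finally show ?thesis by (simp add: add.assoc)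
    qed
    have q: "(k mod L + t) mod L = (k + t) mod L" by (simp add: mod_add_left_eq)
    show ?thesis
    proof (cases "k + t < L")
      case True
      then have "(k + t) mod L = k + t" by simp
      moreover have "(k + 1 + t) mod Suc L = k + 1 + t" using True by simp
      moreover have "ys ! (k + t) = xs ! (k + 1 + t)"
        unfolding ys_def using True kL lx by (simp add: nth_append)
      ultimately show ?thesis using e IH q idx lx t_def by simp
    next
      case False
      then have "(k + t) mod L = k + t - L" using tL kL
        by (simp add: le_mod_geq)
      moreover have "(k + 1 + t) mod Suc L = k + t - L" using False tL kL
        by (simp add: le_mod_geq)
      moreover have "ys ! (k + t - L) = xs ! (k + t - L)"
      proof -
        have "k + t - L < k" using tL False by linarith
        then show ?thesis unfolding ys_def using kL lx by (simp add: nth_append)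
      qed
      ultimately show ?thesis using e IH q idx lx t_def by simp
    qed
  qed
qed

fun jj :: "nat \<Rightarrow> nat \<Rightarrow> nat" where
  "jj m 0 = 0"
| "jj m (Suc 0) = 0"
| "jj m (Suc (Suc n)) = nat ((int (jj m (Suc n)) - int m) mod int (Suc n))"

lemma Trow_len: "length (Trow m x) = x"
  by (induction m x rule: Trow.induct) (auto simp: Let_def)

lemma Trow_pos: "v \<in> set (Trow m x) \<Longrightarrow> v \<ge> 1"
  by (induction m x arbitrary: v rule: Trow.induct) (auto simp: Let_def)

lemma Trow_ne: "x \<ge> 1 \<Longrightarrow> Trow m x \<noteq> []"
  using Trow_len[of m x] by auto

lemma jj_lt: "x \<ge> 1 \<Longrightarrow> jj m x < x"
proof (induction m x rule: jj.induct)
  case (3 m n)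
  define v where "v = (int (jj m (Suc n)) - int m) mod int (Suc n)"
  have h1: "v < int (Suc n)" unfolding v_def by (rule pos_mod_bound) simp
  have h0: "0 \<le> v" unfolding v_def by (rule pos_mod_sign) simp
  have "nat v < Suc n" using nat_less_iff[OF h0] h1 by blast
  then show ?case unfolding v_def by simp
qed auto

lemma jj_lt2: "jj m (Suc (Suc n)) < Suc n"
proof -
  define v where "v = (int (jj m (Suc n)) - int m) mod int (Suc n)"
  have h1: "v < int (Suc n)" unfolding v_def by (rule pos_mod_bound) simp
  have h0: "0 \<le> v" unfolding v_def by (rule pos_mod_sign) simp
  have "nat v < Suc n" using nat_less_iff[OF h0] h1 by blast
  then show ?thesis unfolding v_def by simp
qed

lemma Trow_one: "x \<ge> 1 \<Longrightarrow> c < x \<Longrightarrow> (Trow m x ! c = 1 \<longleftrightarrow> c = jj m x)"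
proof (induction m x arbitrary: c rule: Trow.induct)
  case (3 m n)
  define r where "r = Trow m (Suc n)"
  have lr: "length r = Suc n" using Trow_len r_def by simp
  have row: "Trow m (Suc (Suc n)) = rotate m r @ [hd r + 1]" using r_def by (simp add: Let_def)
  have hd1: "hd r \<ge> 1" using Trow_pos[of "hd r" m "Suc n"] r_def lr
    by (metis hd_in_set list.size(3) nat.distinct(1))
  show ?case
  proof (cases "c < Suc n")
    case True
    have "Trow m (Suc (Suc n)) ! c = r ! ((c + m) mod Suc n)"
      using True row lr by (simp add: nth_append nth_rotate add.commute)
    also have "\<dots> = 1 \<longleftrightarrow> (c + m) mod Suc n = jj m (Suc n)"
      using "3.IH"[of "(c + m) mod Suc n"] r_def by simp
    also have "\<dots> \<longleftrightarrow> c = jj m (Suc (Suc n))"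
    proof -
      have "(c + m) mod Suc n = jj m (Suc n) \<longleftrightarrow>
            int c = (int (jj m (Suc n)) - int m) mod int (Suc n)"
      proof
        assume a: "(c + m) mod Suc n = jj m (Suc n)"
        have "int c = int c mod int (Suc n)" using True by simp
        also have "\<dots> = (int (c + m) - int m) mod int (Suc n)" by simp
        also have "\<dots> = (int ((c + m) mod Suc n) - int m) mod int (Suc n)"
          by (metis mod_diff_left_eq of_nat_mod)
        finally show "int c = (int (jj m (Suc n)) - int m) mod int (Suc n)" using a by simp
      next
        assume a: "int c = (int (jj m (Suc n)) - int m) mod int (Suc n)"
        have "int ((c + m) mod Suc n) = (int c + int m) mod int (Suc n)" by (simp add: of_nat_mod)
        also have "\<dots> = (int (jj m (Suc n)) - int m + int m) mod int (Suc n)"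
          using a by (metis mod_add_left_eq)
        also have "\<dots> = int (jj m (Suc n))" using jj_lt[of "Suc n" m] by simp
        finally show "(c + m) mod Suc n = jj m (Suc n)" by linarith
      qed
      moreover have "int (jj m (Suc (Suc n))) = (int (jj m (Suc n)) - int m) mod int (Suc n)"
        by simp
      ultimately show ?thesis by linarith
    qed
    finally show ?thesis .
  next
    case False
    then have c: "c = Suc n" using "3.prems" by simp
    have "Trow m (Suc (Suc n)) ! c = hd r + 1" using row lr c by (simp add: nth_append)
    moreover have "jj m (Suc (Suc n)) < Suc n" by (rule jj_lt2)
    ultimately show ?thesis using hd1 c by simp
  qed
qed auto

lemma jcol_eq: "x \<ge> 1 \<Longrightarrow> jcol m x = jj m x"
  unfolding jcol_def
  by (rule the_equality) (use Trow_one jj_lt in auto)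

lemma jj_R: "x \<ge> 1 \<Longrightarrow> int (jj m x) = (int m - 1 - int (R (m + 1) x)) mod int x"
proof (induction m x rule: jj.induct)
  case (3 m n)
  define L where "L = Suc n"
  have RL: "R (m+1) L < L" using R_lt[of L] L_def by simp
  have "int (jj m (Suc (Suc n))) = (int (jj m L) - int m) mod int L" using L_def by simp
  also have "\<dots> = ((int m - 1 - int (R (m + 1) L)) - int m) mod int L"
    using "3.IH" L_def by (simp add: mod_diff_left_eq)
  also have "\<dots> = int L - 1 - int (R (m+1) L)"
  proof -
    have "((int m - 1 - int (R (m + 1) L)) - int m) = (int L - 1 - int (R (m+1) L)) + (-1) * int L"
      by simp
    then have "((int m - 1 - int (R (m + 1) L)) - int m) mod int L = (int L - 1 - int (R (m+1) L)) mod int L"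
      by (metis mod_mult_self1)
    then show ?thesis using RL by simp
  qed
  also have "\<dots> = (int m - 1 - int (R (m + 1) (Suc L))) mod int (Suc L)"
  proof -
    have "R (m+1) (Suc L) = (m + 1 + R (m+1) L) mod Suc L" using L_def by simp
    then have ir: "int (R (m + 1) (Suc L)) = (int m + 1 + int (R (m+1) L)) mod int (Suc L)"
      by (simp only: of_nat_mod of_nat_add of_nat_1)
    have "(int m - 1 - int (R (m + 1) (Suc L))) mod int (Suc L)
        = (int m - 1 - (int m + 1 + int (R (m+1) L))) mod int (Suc L)"
      unfolding ir by (rule mod_diff_right_eq)
    also have "\<dots> = (int L - 1 - int (R (m+1) L) + (-1) * int (Suc L)) mod int (Suc L)"
      by (simp add: algebra_simps)
    also have "\<dots> = (int L - 1 - int (R (m+1) L)) mod int (Suc L)"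
      by (metis mod_mult_self1)
    also have "\<dots> = int L - 1 - int (R (m+1) L)" using RL by simp
    finally show ?thesis by simp
  qed
  finally show ?case using L_def by simp
qed auto

theorem mainTheorem19:
  fixes m x :: nat
  assumes "m > 0" and "x > 1"
  shows "josephus (m + 1) x \<in> {1..x}
         \<and> [int (josephus (m + 1) x) = int m - int (jcol m x)] (mod int x)
         \<and> Trow m x ! game_last_col m x = 1"
proof -
  have x1: "x \<ge> 1" using assms by simp
  define r where "r = R (m+1) x"
  have rx: "r < x" using R_lt[OF x1] r_def by simp
  have J: "josephus (m + 1) x = r + 1"
  proof -
    have "josephus (m + 1) x = [1..<x+1] ! r"
      unfolding josephus_def using elim_R[of "m+1" "[1..<x+1]" 0] x1 rx r_def
      by (simp del: upt_Suc)
    also have "\<dots> = r + 1" using rx by (simp del: upt_Suc add: nth_upt)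
    finally show ?thesis .
  qed
  have jr: "int (jcol m x) = (int m - 1 - int r) mod int x"
    using jj_R[OF x1] jcol_eq[OF x1] r_def by simp
  have c2: "[int (josephus (m + 1) x) = int m - int (jcol m x)] (mod int x)"
  proof -
    have "(int m - (int m - 1 - int r) mod int x) mod int x = (int m - (int m - 1 - int r)) mod int x"
      by (rule mod_diff_right_eq)
    also have "int m - (int m - 1 - int r) = int (r + 1)" by simp
    finally show ?thesis unfolding cong_def J jr by simp
  qed
  define s where "s = x - 1 - (m - 1) mod x"
  define p where "p = (s + r) mod x"
  have px: "p < x" using p_def x1 by simp
  have G: "game_last_col m x = x - 1 - p"
    unfolding game_last_col_def using elim_R[of "m+1" "rev [0..<x]" s] x1 px
    by (simp add: rev_nth p_def r_def s_def)
  have "int (x - 1 - p) = (int m - 1 - int r) mod int x"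
  proof -
    have ms: "(m - 1) mod x < x" using x1 by simp
    have iss: "int s = int x - 1 - int ((m - 1) mod x)" using ms s_def by simp
    have ip: "int p = (int s + int r) mod int x" using p_def by (simp add: of_nat_mod)
    have "int (x - 1 - p) = (int x - 1 - int p) mod int x" using px by simp
    also have "\<dots> = (int x - 1 - (int s + int r)) mod int x"
      unfolding ip by (simp add: mod_diff_right_eq)
    also have "\<dots> = (int ((m - 1) mod x) - int r) mod int x" unfolding iss by simp
    also have "\<dots> = (int (m - 1) - int r) mod int x"
      by (metis mod_diff_left_eq of_nat_mod)
    also have "\<dots> = (int m - 1 - int r) mod int x" using assms(1) by simp
    finally show ?thesis .
  qed
  then have "int (game_last_col m x) = int (jj m x)" using G jj_R[OF x1, of m] r_def by simp
  then have "game_last_col m x = jj m x" by simp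
  then have c3: "Trow m x ! game_last_col m x = 1" using Trow_one[OF x1] jj_lt[OF x1] by simp
  show ?thesis using c2 c3 J rx by simp
qed

end
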